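(* Let $\mu$ be a probability measure on a set $\mathcal{X}$ and let $k:\mathcal{X}\times\mathcal{X}\to\mathbb{R}$ be a positive-definite kernel with real RKHS $\mathcal{H}$, satisfying $\sup_{x\in\mathcal{X}}\sqrt{k(x,x)}\le\kappa$ for some $\kappa>0$, and admitting a Mercer expansion $k(x,y)=\sum_{j=1}^\infty \sigma_j e_j(x)e_j(y)$ for all $x,y\in\mathcal{X}$, where $(e_j)_{j\ge1}$ is an orthonormal set in $L^2(\mu)$ and $\sigma_1\ge\sigma_2\ge\cdots\ge0$. Fix an integer $d\ge1$ and define $\bm\Phi_d(x):=(\sqrt{\sigma_1}e_1(x),\dots,\sqrt{\sigma_d}e_d(x))^\top\in\mathbb{R}^d$, $g_d(x):=\sqrt{\sum_{j>d}\sigma_j e_j(x)^2}$, and $\bm\Psi_d(x):=(\bm\Phi_d(x)^\top,g_d(x))^\top\in\mathbb{R}^{d+1}$. Let $x_1,\dots,x_N\in\mathcal{X}$, let $\bm w=(w_i)_{i=1}^N\in\Delta_N$, and define $Q_N(f):=\sum_{i=1}^N w_i f(x_i)$. If \[ \Bigl|\mathbb{E}_{x\sim\mu}[\bm\Psi_d(x)]-\sum_{i=1}^N w_i\bm\Psi_d(x_i)\Bigr|\le\varepsilon \] for some $\varepsilon\ge0$, then \[ \operatorname{wce}(Q_N;\mathcal{H},\mu)\le 2\int g_d(x)\,\mathrm{d}\mu(x)+\varepsilon\le 2\sqrt{\sum_{j>d}\sigma_j}+\varepsilon . \]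
   Context: $\Delta_N:=\{\bm w\in\mathbb{R}^N_{\ge0}:\sum_{i=1}^N w_i=1\}$ is the probability simplex and $|\cdot|$ is the Euclidean norm. For a quadrature rule $Q_N(f)=\sum_i w_i f(x_i)$, the worst-case error is $\operatorname{wce}(Q_N;\mathcal{H},\mu):=\sup_{\|f\|_{\mathcal{H}}\le1}\bigl|\int f\,\mathrm{d}\mu-Q_N(f)\bigr|$, which equals $\bigl\|m_\mu-\sum_{i}w_ik(x_i,\cdot)\bigr\|_{\mathcal{H}}$ where $m_\mu:=\int k(x,\cdot)\,\mathrm{d}\mu(x)\in\mathcal{H}$ is the kernel mean embedding. *)

theory Defs
  imports "HOL-Probability.Probability"
begin

text \<open>The RKHS is modelled by a real Hilbert space 'h together with a canonical
feature map Phi with k x y = Phi x \<bullet> Phi y and span (range Phi) dense; the RKHS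
function associated with h is x \<mapsto> h \<bullet> Phi x, and its RKHS norm is norm h.\<close>

definition rkhs_fun :: "('a \<Rightarrow> 'h::real_inner) \<Rightarrow> 'h \<Rightarrow> 'a \<Rightarrow> real" where
  "rkhs_fun Phi h = (\<lambda>y. h \<bullet> Phi y)"

definition quad :: "nat \<Rightarrow> (nat \<Rightarrow> real) \<Rightarrow> (nat \<Rightarrow> 'a) \<Rightarrow> ('a \<Rightarrow> real) \<Rightarrow> real" where
  "quad N w x f = (\<Sum>i<N. w i * f (x i))"

definition wce :: "nat \<Rightarrow> (nat \<Rightarrow> real) \<Rightarrow> (nat \<Rightarrow> 'a) \<Rightarrow> ('a \<Rightarrow> 'h::real_inner) \<Rightarrow> 'a measure \<Rightarrow> real" where
  "wce N w x Phi M =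
     (SUP h\<in>{h. norm h \<le> 1}. \<bar>(\<integral>y. rkhs_fun Phi h y \<partial>M) - quad N w x (rkhs_fun Phi h)\<bar>)"

definition prob_simplex :: "nat \<Rightarrow> (nat \<Rightarrow> real) set" where
  "prob_simplex N = {w. (\<forall>i<N. 0 \<le> w i) \<and> (\<Sum>i<N. w i) = 1}"

text \<open>Mercer eigenpairs indexed from 0: (sigma j, e j) is the paper's (sigma_{j+1}, e_{j+1}).\<close>
definition tail_fun :: "(nat \<Rightarrow> real) \<Rightarrow> (nat \<Rightarrow> 'a \<Rightarrow> real) \<Rightarrow> nat \<Rightarrow> 'a \<Rightarrow> real" where
  "tail_fun \<sigma> e d x = sqrt (\<Sum>j. \<sigma> (j + d) * (e (j + d) x)\<^sup>2)"

definition Psi_coord :: "(nat \<Rightarrow> real) \<Rightarrow> (nat \<Rightarrow> 'a \<Rightarrow> real) \<Rightarrow> nat \<Rightarrow> nat \<Rightarrow> 'a \<Rightarrow> real" where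
  "Psi_coord \<sigma> e d j x = (if j < d then sqrt (\<sigma> j) * e j x else tail_fun \<sigma> e d x)"

end

theory Submission
  imports Defs
begin

lemma parallelogram_norm:
  fixes a b :: "'h::real_inner"
  shows "(norm (a + b))\<^sup>2 + (norm (a - b))\<^sup>2 = 2 * (norm a)\<^sup>2 + 2 * (norm b)\<^sup>2"
  by (simp add: power2_norm_eq_inner algebra_simps inner_commute)

lemma proj_exists:
  fixes W :: "'h::{real_inner,complete_space} set"
  assumes sub: "subspace W" and cl: "closed W"
  shows "\<exists>p\<in>W. \<forall>w\<in>W. (h - p) \<bullet> w = 0"
proof -
  have W0: "0 \<in> W" using sub by (simp add: subspace_0)
  define \<delta> where "\<delta> = infdist h W"
  have d0: "\<delta> \<ge> 0" unfolding \<delta>_def by (rule infdist_nonneg)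
  have dle: "\<delta> \<le> dist h w" if "w \<in> W" for w unfolding \<delta>_def using that by (rule infdist_le)
  have ex: "\<exists>w\<in>W. dist h w < \<delta> + 1 / (real n + 1)" for n
  proof (rule ccontr)
    assume "\<not> ?thesis"
    then have "\<forall>w\<in>W. \<delta> + 1 / (real n + 1) \<le> dist h w" by force
    then have "\<delta> + 1 / (real n + 1) \<le> infdist h W"
      unfolding infdist_notempty[OF W0[THEN ex_in_conv[THEN iffD1, OF exI]]]
      using W0 by (intro cINF_greatest) auto
    then show False unfolding \<delta>_def by (smt (verit) divide_pos_pos of_nat_0_le_iff)
  qed
  then obtain s where s: "\<And>n. s n \<in> W" "\<And>n. dist h (s n) < \<delta> + 1 / (real n + 1)"
    by metis
  have bnd: "(norm (s n - s m))\<^sup>2 \<le> (4 * \<delta> + 2) * (1 / (real n + 1) + 1 / (real m + 1))" for n m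
  proof -
    define a where "a = 1 / (real n + 1)"
    define b where "b = 1 / (real m + 1)"
    have a: "0 \<le> a" "a \<le> 1" unfolding a_def by auto
    have b: "0 \<le> b" "b \<le> 1" unfolding b_def by auto
    have mid: "(1/2) *\<^sub>R (s n + s m) \<in> W"
      using sub s(1) by (simp add: subspace_add subspace_scale)
    have "\<delta> \<le> norm (h - (1/2) *\<^sub>R (s n + s m))" using dle[OF mid] by (simp add: dist_norm)
    then have m2: "\<delta>\<^sup>2 \<le> (norm (h - (1/2) *\<^sub>R (s n + s m)))\<^sup>2" using d0 by (simp add: power_mono)
    have eq: "(h - s n) + (h - s m) = 2 *\<^sub>R (h - (1/2) *\<^sub>R (s n + s m))"
      by (simp add: algebra_simps scaleR_2)
    have "(norm ((h - s n) + (h - s m)))\<^sup>2 = 4 * (norm (h - (1/2) *\<^sub>R (s n + s m)))\<^sup>2"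
      unfolding eq by (simp add: power2_eq_square)
    moreover have "(norm (s m - s n))\<^sup>2 = (norm ((h - s n) - (h - s m)))\<^sup>2" by simp
    moreover have n1: "norm (h - s n) \<le> \<delta> + a" using s(2)[of n] by (simp add: dist_norm a_def)
    moreover have n2: "norm (h - s m) \<le> \<delta> + b" using s(2)[of m] by (simp add: dist_norm b_def)
    ultimately have "(norm (s m - s n))\<^sup>2 \<le> 2 * (\<delta> + a)\<^sup>2 + 2 * (\<delta> + b)\<^sup>2 - 4 * \<delta>\<^sup>2"
      using parallelogram_norm[of "h - s n" "h - s m"] m2
        power_mono[OF n1 norm_ge_zero, of 2] power_mono[OF n2 norm_ge_zero, of 2]
      by linarith
    also have "\<dots> = 4 * \<delta> * (a + b) + 2 * a * a + 2 * b * b" by (simp add: power2_eq_square algebra_simps)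
    also have "\<dots> \<le> 4 * \<delta> * (a + b) + 2 * a + 2 * b"
      using a b by (smt (verit) mult_left_le mult_nonneg_nonneg)
    also have "\<dots> = (4 * \<delta> + 2) * (a + b)" by (simp add: algebra_simps)
    finally show ?thesis by (simp add: norm_minus_commute a_def b_def)
  qed
  have "Cauchy s"
  proof (rule metric_CauchyI)
    fix e :: real assume e: "e > 0"
    obtain N :: nat where N: "(4 * \<delta> + 2) * 2 / e\<^sup>2 < real N"
      using reals_Archimedean2 by blast
    have "0 \<le> (4 * \<delta> + 2) * 2 / e\<^sup>2" by (intro divide_nonneg_nonneg mult_nonneg_nonneg) (use d0 in auto)
    then have Npos: "real N > 0" using N by linarith
    show "\<exists>M. \<forall>m\<ge>M. \<forall>n\<ge>M. dist (s m) (s n) < e"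
    proof (intro exI allI impI)
      fix m n assume mn: "N \<le> m" "N \<le> n"
      have i1: "1 / (real n + 1) \<le> 1 / real N" using mn Npos by (intro divide_left_mono) auto
      have i2: "1 / (real m + 1) \<le> 1 / real N" using mn Npos by (intro divide_left_mono) auto
      have "(norm (s n - s m))\<^sup>2 \<le> (4 * \<delta> + 2) * (2 / real N)"
      proof -
        have "1 / (real n + 1) + 1 / (real m + 1) \<le> 2 / real N" using i1 i2 by simp
        then have "(4 * \<delta> + 2) * (1 / (real n + 1) + 1 / (real m + 1)) \<le> (4 * \<delta> + 2) * (2 / real N)"
          using d0 by (intro mult_left_mono) auto
        then show ?thesis using bnd[of n m] by linarith
      qed
      also have "\<dots> < e\<^sup>2"
        using N Npos e by (simp add: field_simps)
      finally have "(norm (s n - s m))\<^sup>2 < e\<^sup>2" .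
      then have "norm (s n - s m) < e" using e by (smt (verit) power_mono norm_ge_zero)
      then show "dist (s m) (s n) < e" by (simp add: dist_norm norm_minus_commute)
    qed
  qed
  then obtain p where p: "s \<longlonglongrightarrow> p" using Cauchy_convergent_iff convergent_def by blast
  have pW: "p \<in> W" using cl s(1) p closed_sequentially by blast
  have pmin: "norm (h - p) \<le> norm (h - w)" if w: "w \<in> W" for w
  proof -
    have l1: "(\<lambda>n. dist h (s n)) \<longlonglongrightarrow> dist h p" using p by (intro tendsto_intros)
    have l2: "(\<lambda>n. dist h w + 1 / (real n + 1)) \<longlonglongrightarrow> dist h w + 0"
      using LIMSEQ_inverse_real_of_nat_add[of "dist h w"] by (simp add: inverse_eq_divide add.commute)
    have "dist h p \<le> dist h w"
    proof -
      have "\<forall>n\<ge>0. dist h (s n) \<le> dist h w + 1 / (real n + 1)"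
        using s(2) dle[OF w] by (smt (verit))
      then show ?thesis using LIMSEQ_le[OF l1 l2] by auto
    qed
    then show ?thesis by (simp add: dist_norm)
  qed
  show ?thesis
  proof (intro bexI[OF _ pW] ballI)
    fix w assume w: "w \<in> W"
    define c where "c = (h - p) \<bullet> w"
    define q where "q = w \<bullet> w"
    have q0: "q \<ge> 0" unfolding q_def by simp
    define t where "t = c / (q + 1)"
    have "p + t *\<^sub>R w \<in> W" using sub pW w by (simp add: subspace_add subspace_scale)
    then have "norm (h - p) \<le> norm (h - (p + t *\<^sub>R w))" by (rule pmin)
    then have "(norm (h - p))\<^sup>2 \<le> (norm ((h - p) - t *\<^sub>R w))\<^sup>2"
      by (simp add: power_mono algebra_simps)
    also have "\<dots> = (norm (h - p))\<^sup>2 - 2 * t * c + t * t * q"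
      unfolding power2_norm_eq_inner c_def q_def by (simp add: algebra_simps inner_commute)
    finally have ineq: "0 \<le> - 2 * t * c + t * t * q" by simp
    have "t * t * q \<le> t * c"
    proof -
      have "t * t * q = c * c * q / ((q+1) * (q+1))" unfolding t_def by simp
      also have "\<dots> = (c * c / (q + 1)) * (q / (q + 1))" by simp
      also have "\<dots> \<le> (c * c / (q + 1)) * 1"
        using q0 by (intro mult_left_mono) auto
      also have "\<dots> = c * c / (q + 1)" by simp
      also have "\<dots> = t * c" unfolding t_def by simp
      finally show ?thesis .
    qed
    with ineq have "t * c \<le> 0" by linarith
    then have "c * c / (q + 1) \<le> 0" unfolding t_def by simp
    then have "c * c \<le> 0" using q0 by (simp add: divide_le_0_iff)
    then show "(h - p) \<bullet> w = 0" unfolding c_def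
      by (metis mult_eq_0_iff not_square_less_zero order_antisym_conv zero_le_square)
  qed
qed

lemma riesz_rep:
  fixes F :: "'h::{real_inner,complete_space} \<Rightarrow> real"
  assumes bl: "bounded_linear F"
  shows "\<exists>u. \<forall>x. F x = u \<bullet> x"
proof (cases "\<forall>x. F x = 0")
  case True then show ?thesis by (intro exI[of _ 0]) simp
next
  case False
  then obtain h0 where h0: "F h0 \<noteq> 0" by blast
  interpret F: bounded_linear F by (rule bl)
  define K where "K = {x. F x = 0}"
  have subK: "subspace K" unfolding K_def subspace_def by (simp add: F.add F.scale)
  have clK: "closed K" unfolding K_def
    by (intro closed_Collect_eq linear_continuous_on bl continuous_on_const)
  obtain p where pK: "p \<in> K" and orth: "\<And>w. w \<in> K \<Longrightarrow> (h0 - p) \<bullet> w = 0"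
    using proj_exists[OF subK clK, of h0] by blast
  define z where "z = h0 - p"
  have Fz: "F z = F h0" using pK unfolding z_def K_def by (simp add: F.diff)
  have zz: "z \<bullet> z \<noteq> 0" using Fz h0 F.zero by auto
  show ?thesis
  proof (intro exI allI)
    fix x
    have "x - (F x / F z) *\<^sub>R z \<in> K" unfolding K_def using Fz h0 by (simp add: F.diff F.scale)
    then have "z \<bullet> (x - (F x / F z) *\<^sub>R z) = 0" using orth unfolding z_def by blast
    then have "z \<bullet> x = (F x / F z) * (z \<bullet> z)" by (simp add: inner_diff_right)
    then show "F x = ((F z / (z \<bullet> z)) *\<^sub>R z) \<bullet> x" using zz Fz h0 by (simp add: field_simps)
  qed
qed


lemma bessel_decomp:
  fixes u :: "nat \<Rightarrow> 'h::real_inner"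
  assumes orth: "\<And>i j. u i \<bullet> u j = (if i = j \<and> P j then 1 else 0)"
  shows "\<And>i. i < d \<Longrightarrow> (x - (\<Sum>j<d. (x \<bullet> u j) *\<^sub>R u j)) \<bullet> u i = 0"
    and "(norm x)\<^sup>2 = (norm (x - (\<Sum>j<d. (x \<bullet> u j) *\<^sub>R u j)))\<^sup>2 + (\<Sum>j<d. (x \<bullet> u j)\<^sup>2)"
proof -
  have z: "u j = 0" if "\<not> P j" for j
    using orth[of j j] that by simp
  have key: "(\<Sum>j<d. (x \<bullet> u j) * (u j \<bullet> u i)) = (if i < d then x \<bullet> u i else 0)" for i
  proof -
    have "(\<Sum>j<d. (x \<bullet> u j) * (u j \<bullet> u i)) = (\<Sum>j<d. if j = i then (if P i then x \<bullet> u i else 0) else 0)"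
      by (intro sum.cong) (auto simp: orth)
    also have "\<dots> = (if i < d then (if P i then x \<bullet> u i else 0) else 0)"
      by (simp add: sum.delta)
    also have "\<dots> = (if i < d then x \<bullet> u i else 0)" using z by auto
    finally show ?thesis .
  qed
  define s where "s = (\<Sum>j<d. (x \<bullet> u j) *\<^sub>R u j)"
  have rs: "(x - s) \<bullet> u i = 0" if "i < d" for i
    using key[of i] that unfolding s_def by (simp add: inner_diff_left inner_sum_left)
  then show "\<And>i. i < d \<Longrightarrow> (x - (\<Sum>j<d. (x \<bullet> u j) *\<^sub>R u j)) \<bullet> u i = 0"
    unfolding s_def by blast
  have r_s: "(x - s) \<bullet> s = 0"
    unfolding s_def[of] by (simp add: inner_sum_right rs[unfolded s_def])
  have ss: "s \<bullet> s = (\<Sum>j<d. (x \<bullet> u j)\<^sup>2)"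
  proof -
    have "s \<bullet> s = (\<Sum>i<d. (x \<bullet> u i) * (\<Sum>j<d. (x \<bullet> u j) * (u j \<bullet> u i)))"
      unfolding s_def by (simp add: inner_sum_left inner_sum_right sum_distrib_left mult.assoc mult.left_commute inner_commute)
    also have "\<dots> = (\<Sum>i<d. (x \<bullet> u i)\<^sup>2)"
      by (intro sum.cong) (auto simp: key power2_eq_square)
    finally show ?thesis .
  qed
  have "(norm x)\<^sup>2 = (norm (x - s))\<^sup>2 + 2 * ((x - s) \<bullet> s) + s \<bullet> s"
    unfolding power2_norm_eq_inner by (simp add: inner_diff_left inner_diff_right inner_commute algebra_simps)
  then show "(norm x)\<^sup>2 = (norm (x - (\<Sum>j<d. (x \<bullet> u j) *\<^sub>R u j)))\<^sup>2 + (\<Sum>j<d. (x \<bullet> u j)\<^sup>2)"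
    unfolding s_def[symmetric] using r_s ss by linarith
qed

lemma cs_partial:
  fixes \<sigma> a b :: "nat \<Rightarrow> real"
  assumes "\<And>i. \<sigma> i \<ge> 0"
  shows "\<bar>\<Sum>i<n. \<sigma> i * a i * b i\<bar> \<le> sqrt (\<Sum>i<n. \<sigma> i * (a i)\<^sup>2) * sqrt (\<Sum>i<n. \<sigma> i * (b i)\<^sup>2)"
proof -
  have "\<bar>\<Sum>i<n. \<sigma> i * a i * b i\<bar> \<le> (\<Sum>i<n. \<bar>\<sigma> i * a i * b i\<bar>)" by (rule sum_abs)
  also have "\<dots> = (\<Sum>i<n. \<bar>sqrt (\<sigma> i) * a i\<bar> * \<bar>sqrt (\<sigma> i) * b i\<bar>)"
  proof (intro sum.cong refl)
    fix i
    have e: "sqrt (\<sigma> i) * sqrt (\<sigma> i) = \<sigma> i" using assms[of i] by simp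
    have "\<bar>sqrt (\<sigma> i) * a i\<bar> * \<bar>sqrt (\<sigma> i) * b i\<bar> = \<bar>(sqrt (\<sigma> i) * sqrt (\<sigma> i)) * (a i * b i)\<bar>"
      by (simp only: abs_mult mult_ac)
    then show "\<bar>\<sigma> i * a i * b i\<bar> = \<bar>sqrt (\<sigma> i) * a i\<bar> * \<bar>sqrt (\<sigma> i) * b i\<bar>"
      unfolding e by (simp only: mult_ac)
  qed
  also have "\<dots> \<le> L2_set (\<lambda>i. sqrt (\<sigma> i) * a i) {..<n} * L2_set (\<lambda>i. sqrt (\<sigma> i) * b i) {..<n}"
    by (rule L2_set_mult_ineq)
  also have "\<dots> = sqrt (\<Sum>i<n. \<sigma> i * (a i)\<^sup>2) * sqrt (\<Sum>i<n. \<sigma> i * (b i)\<^sup>2)"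
    unfolding L2_set_def using assms by (simp add: power_mult_distrib real_sqrt_pow2)
  finally show ?thesis .
qed


lemma abs_le_one_plus_sq:
  fixes t :: real shows "\<bar>t\<bar> \<le> 1 + t\<^sup>2"
proof -
  have "0 \<le> (\<bar>t\<bar> - 1/2)\<^sup>2" by simp
  moreover have "(\<bar>t\<bar> - 1/2)\<^sup>2 = t\<^sup>2 - \<bar>t\<bar> + 1/4"
    by (simp add: power2_eq_square algebra_simps)
  ultimately show ?thesis by linarith
qed

lemma abs_mult_le_sq_sum:
  fixes a b :: real shows "\<bar>a * b\<bar> \<le> a\<^sup>2 + b\<^sup>2"
proof -
  have "0 \<le> (\<bar>a\<bar> - \<bar>b\<bar>)\<^sup>2" by simp
  moreover have "(\<bar>a\<bar> - \<bar>b\<bar>)\<^sup>2 = a\<^sup>2 + b\<^sup>2 - 2 * \<bar>a * b\<bar>"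
    by (simp add: power2_eq_square algebra_simps abs_mult)
  moreover have "0 \<le> \<bar>a * b\<bar>" by simp
  ultimately show ?thesis by linarith
qed


theorem proposition5:
  fixes M :: "'a measure"
    and k :: "'a \<Rightarrow> 'a \<Rightarrow> real"
    and Phi :: "'a \<Rightarrow> 'h::{real_inner, complete_space}"
    and \<kappa> :: real
    and \<sigma> :: "nat \<Rightarrow> real"
    and e :: "nat \<Rightarrow> 'a \<Rightarrow> real"
    and d N :: nat
    and x :: "nat \<Rightarrow> 'a"
    and w :: "nat \<Rightarrow> real"
    and \<epsilon> :: real
  assumes prob: "prob_space M"
    and feature: "\<And>y z. k y z = Phi y \<bullet> Phi z"
    and dense: "closure (span (range Phi)) = UNIV"
    and kappa_pos: "\<kappa> > 0"
    and kappa_bound: "\<And>y. y \<in> space M \<Longrightarrow> sqrt (k y y) \<le> \<kappa>"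
    and e_meas: "\<And>j. e j \<in> borel_measurable M"
    and e_L2: "\<And>j. integrable M (\<lambda>y. (e j y)\<^sup>2)"
    and e_orthonormal: "\<And>i j. (\<integral>y. e i y * e j y \<partial>M) = (if i = j then 1 else 0)"
    and \<sigma>_nonneg: "\<And>j. \<sigma> j \<ge> 0"
    and \<sigma>_decr: "decseq \<sigma>"
    and mercer: "\<And>y z. y \<in> space M \<Longrightarrow> z \<in> space M \<Longrightarrow>
                   (\<lambda>j. \<sigma> j * e j y * e j z) sums k y z"
    and d_pos: "d \<ge> 1"
    and x_in: "\<And>i. i < N \<Longrightarrow> x i \<in> space M"
    and w_simplex: "w \<in> prob_simplex N"
    and eps_nonneg: "\<epsilon> \<ge> 0"
    and approx: "L2_set (\<lambda>j. (\<integral>y. Psi_coord \<sigma> e d j y \<partial>M)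
                             - (\<Sum>i<N. w i * Psi_coord \<sigma> e d j (x i))) {..d} \<le> \<epsilon>"
  shows "wce N w x Phi M \<le> 2 * (\<integral>y. tail_fun \<sigma> e d y \<partial>M) + \<epsilon>
       \<and> 2 * (\<integral>y. tail_fun \<sigma> e d y \<partial>M) + \<epsilon> \<le> 2 * sqrt (\<Sum>j. \<sigma> (j + d)) + \<epsilon>"
proof -
  interpret P: prob_space M by (rule prob)
  note [measurable] = e_meas
  have normPhi: "norm (Phi y) = sqrt (k y y)" for y
    by (simp add: feature norm_eq_sqrt_inner)
  have Phi_bound: "norm (Phi y) \<le> \<kappa>" if "y \<in> space M" for y
    using kappa_bound[OF that] normPhi by simp
  have k_nonneg: "k y y \<ge> 0" for y by (simp add: feature)
  have kyy: "k y y \<le> \<kappa>\<^sup>2" if "y \<in> space M" for y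
    using kappa_bound[OF that] k_nonneg[of y] kappa_pos
    by (metis real_sqrt_le_iff real_sqrt_pow2 sqrt_le_D)
  have ser: "(\<lambda>j. \<sigma> j * (e j y)\<^sup>2) sums k y y" if "y \<in> space M" for y
    using mercer[OF that that] by (simp add: power2_eq_square mult.assoc)
  have e_int: "integrable M (e j)" for j
  proof (rule Bochner_Integration.integrable_bound[of _ "\<lambda>y. 1 + (e j y)\<^sup>2"])
    show "integrable M (\<lambda>y. 1 + (e j y)\<^sup>2)" using e_L2[of j] by simp
    show "AE y in M. norm (e j y) \<le> norm (1 + (e j y)\<^sup>2)"
      using abs_le_one_plus_sq by (intro AE_I2) (smt (verit) real_norm_def zero_le_power2)
  qed simp
  have ee_int: "integrable M (\<lambda>y. e i y * e j y)" for i j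
  proof (rule Bochner_Integration.integrable_bound[of _ "\<lambda>y. (e i y)\<^sup>2 + (e j y)\<^sup>2"])
    show "integrable M (\<lambda>y. (e i y)\<^sup>2 + (e j y)\<^sup>2)" using e_L2[of i] e_L2[of j] by simp
    show "AE y in M. norm (e i y * e j y) \<le> norm ((e i y)\<^sup>2 + (e j y)\<^sup>2)"
      using abs_mult_le_sq_sum by (intro AE_I2) (smt (verit) real_norm_def zero_le_power2)
  qed simp
  define S where "S = {p. (\<lambda>y. p \<bullet> Phi y) \<in> borel_measurable M}"
  have subS: "subspace S"
    unfolding subspace_def S_def by (simp add: inner_add_left)
  have clS: "closed S"
    unfolding closed_sequential_limits
  proof (intro allI impI)
    fix s l assume a: "(\<forall>n. s n \<in> S) \<and> s \<longlonglongrightarrow> l"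
    show "l \<in> S" unfolding S_def
    proof (simp, rule borel_measurable_LIMSEQ_real[where u="\<lambda>n y. s n \<bullet> Phi y"])
      show "(\<lambda>n. s n \<bullet> Phi y) \<longlonglongrightarrow> l \<bullet> Phi y" for y using a by (intro tendsto_intros) auto
      show "(\<lambda>y. s n \<bullet> Phi y) \<in> borel_measurable M" for n using a unfolding S_def by auto
    qed
  qed
  have PhiS: "Phi z \<in> S" if "z \<in> space M" for z
  proof -
    have "(\<lambda>y. Phi z \<bullet> Phi y) \<in> borel_measurable M \<longleftrightarrow> (\<lambda>y. \<Sum>j. \<sigma> j * e j z * e j y) \<in> borel_measurable M"
      by (intro measurable_cong) (metis feature mercer[OF that] sums_unique)
    moreover have "(\<lambda>y. \<Sum>j. \<sigma> j * e j z * e j y) \<in> borel_measurable M" by measurable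
    ultimately show ?thesis unfolding S_def by simp
  qed
  have meas_h: "(\<lambda>y. h \<bullet> Phi y) \<in> borel_measurable M" for h
  proof -
    obtain p where pS: "p \<in> S" and orth: "\<And>v. v \<in> S \<Longrightarrow> (h - p) \<bullet> v = 0"
      using proj_exists[OF subS clS, of h] by blast
    have "(\<lambda>y. h \<bullet> Phi y) \<in> borel_measurable M \<longleftrightarrow> (\<lambda>y. p \<bullet> Phi y) \<in> borel_measurable M"
    proof (intro measurable_cong)
      fix y assume "y \<in> space M"
      then have "(h - p) \<bullet> Phi y = 0" using orth PhiS by blast
      then show "h \<bullet> Phi y = p \<bullet> Phi y" by (simp add: inner_diff_left)
    qed
    then show ?thesis using pS unfolding S_def by simp
  qed
  have heP_int: "integrable M (\<lambda>z. e j z * (h \<bullet> Phi z))" for j h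
  proof (rule Bochner_Integration.integrable_bound[of _ "\<lambda>z. (\<kappa> * norm h) * e j z"])
    show "integrable M (\<lambda>z. (\<kappa> * norm h) * e j z)" using e_int[of j] by simp
    show "(\<lambda>z. e j z * (h \<bullet> Phi z)) \<in> borel_measurable M" using meas_h[of h] by measurable
    show "AE z in M. norm (e j z * (h \<bullet> Phi z)) \<le> norm ((\<kappa> * norm h) * e j z)"
    proof (intro AE_I2)
      fix z assume z: "z \<in> space M"
      have "\<bar>h \<bullet> Phi z\<bar> \<le> norm h * norm (Phi z)" by (rule Cauchy_Schwarz_ineq2)
      also have "\<dots> \<le> norm h * \<kappa>" using Phi_bound[OF z] by (intro mult_left_mono) auto
      finally have "\<bar>h \<bullet> Phi z\<bar> \<le> \<kappa> * norm h" by (simp add: mult.commute)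
      then show "norm (e j z * (h \<bullet> Phi z)) \<le> norm ((\<kappa> * norm h) * e j z)"
        using kappa_pos by (simp add: abs_mult mult.commute mult_left_mono)
    qed
  qed
  have mercer_int: "(\<integral>z. e j z * k z y \<partial>M) = \<sigma> j * e j y" if y: "y \<in> space M" for j y
  proof -
    define s where "s n z = e j z * (\<Sum>i<n. \<sigma> i * e i z * e i y)" for n z
    have s_eq: "s n z = (\<Sum>i<n. (\<sigma> i * e i y) * (e j z * e i z))" for n z
      unfolding s_def by (simp add: sum_distrib_left mult_ac)
    have int_s: "integral\<^sup>L M (s n) = (if j < n then \<sigma> j * e j y else 0)" for n
    proof -
      have "integral\<^sup>L M (s n) = (\<Sum>i<n. (\<sigma> i * e i y) * (\<integral>z. e j z * e i z \<partial>M))"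
        unfolding s_eq by (simp add: ee_int)
      also have "\<dots> = (\<Sum>i<n. if j = i then \<sigma> j * e j y else 0)"
        by (intro sum.cong) (auto simp: e_orthonormal)
      also have "\<dots> = (if j < n then \<sigma> j * e j y else 0)" by simp
      finally show ?thesis .
    qed
    have lim1: "(\<lambda>n. integral\<^sup>L M (s n)) \<longlonglongrightarrow> \<sigma> j * e j y"
    proof (rule tendsto_eventually)
      show "\<forall>\<^sub>F n in sequentially. integral\<^sup>L M (s n) = \<sigma> j * e j y"
        using eventually_gt_at_top[of j] by eventually_elim (simp add: int_s)
    qed
    have kmeas: "(\<lambda>z. e j z * k z y) \<in> borel_measurable M"
    proof -
      have "(\<lambda>z. e j z * k z y) = (\<lambda>z. e j z * (Phi y \<bullet> Phi z))"
        by (simp add: feature inner_commute)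
      then show ?thesis using meas_h[of "Phi y"] by simp
    qed
    have lim2: "(\<lambda>n. integral\<^sup>L M (s n)) \<longlonglongrightarrow> (\<integral>z. e j z * k z y \<partial>M)"
    proof (rule integral_dominated_convergence[where w="\<lambda>z. \<kappa>\<^sup>2 * \<bar>e j z\<bar>"])
      show "(\<lambda>z. e j z * k z y) \<in> borel_measurable M" by (rule kmeas)
      show "s n \<in> borel_measurable M" for n unfolding s_def by measurable
      show "integrable M (\<lambda>z. \<kappa>\<^sup>2 * \<bar>e j z\<bar>)" using e_int[of j] by simp
      show "AE z in M. (\<lambda>n. s n z) \<longlonglongrightarrow> e j z * k z y"
      proof (intro AE_I2)
        fix z assume z: "z \<in> space M"
        show "(\<lambda>n. s n z) \<longlonglongrightarrow> e j z * k z y"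
          unfolding s_def using mercer[OF z y] unfolding sums_def by (intro tendsto_intros)
      qed
      show "AE z in M. norm (s n z) \<le> \<kappa>\<^sup>2 * \<bar>e j z\<bar>" for n
      proof (intro AE_I2)
        fix z assume z: "z \<in> space M"
        have p1: "(\<Sum>i<n. \<sigma> i * (e i z)\<^sup>2) \<le> k z z"
          using ser[OF z] \<sigma>_nonneg by (intro sum_le_suminf[of _ "{..<n}", THEN order_trans]) (auto simp: sums_iff)
        have p2: "(\<Sum>i<n. \<sigma> i * (e i y)\<^sup>2) \<le> k y y"
          using ser[OF y] \<sigma>_nonneg by (intro sum_le_suminf[of _ "{..<n}", THEN order_trans]) (auto simp: sums_iff)
        have q1: "sqrt (\<Sum>i<n. \<sigma> i * (e i z)\<^sup>2) \<le> \<kappa>"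
          by (rule order_trans[OF real_sqrt_le_mono[OF p1] kappa_bound[OF z]])
        have q2: "sqrt (\<Sum>i<n. \<sigma> i * (e i y)\<^sup>2) \<le> \<kappa>"
          by (rule order_trans[OF real_sqrt_le_mono[OF p2] kappa_bound[OF y]])
        have m: "sqrt (\<Sum>i<n. \<sigma> i * (e i z)\<^sup>2) * sqrt (\<Sum>i<n. \<sigma> i * (e i y)\<^sup>2) \<le> \<kappa> * \<kappa>"
          using q1 q2 kappa_pos \<sigma>_nonneg by (intro mult_mono) (auto intro!: sum_nonneg)
        have cb: "\<bar>\<Sum>i<n. \<sigma> i * e i z * e i y\<bar> \<le> \<kappa> * \<kappa>"
          by (rule order_trans[OF cs_partial[where \<sigma>=\<sigma> and n=n and a="\<lambda>i. e i z" and b="\<lambda>i. e i y", OF \<sigma>_nonneg] m])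
        show "norm (s n z) \<le> \<kappa>\<^sup>2 * \<bar>e j z\<bar>"
          unfolding s_def using mult_right_mono[OF cb abs_ge_zero[of "e j z"]]
          by (simp add: abs_mult power2_eq_square mult.commute)
      qed
    qed
    show ?thesis using LIMSEQ_unique[OF lim2 lim1] .
  qed
  have hP_bound: "\<bar>h \<bullet> Phi z\<bar> \<le> \<kappa> * norm h" if z: "z \<in> space M" for h z
  proof -
    have "\<bar>h \<bullet> Phi z\<bar> \<le> norm h * norm (Phi z)" by (rule Cauchy_Schwarz_ineq2)
    also have "\<dots> \<le> norm h * \<kappa>" using Phi_bound[OF z] by (intro mult_left_mono) auto
    finally show ?thesis by (simp add: mult.commute)
  qed
  have u_ex: "\<exists>u. (\<sigma> j = 0 \<longrightarrow> u = 0) \<and>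
      (\<sigma> j > 0 \<longrightarrow> (\<forall>h. u \<bullet> h = (\<integral>z. e j z * (h \<bullet> Phi z) \<partial>M) / sqrt (\<sigma> j)))" for j
  proof (cases "\<sigma> j = 0")
    case True then show ?thesis by (intro exI[of _ 0]) simp
  next
    case False
    then have sp: "\<sigma> j > 0" using \<sigma>_nonneg[of j] by simp
    define F where "F h = (\<integral>z. e j z * (h \<bullet> Phi z) \<partial>M) / sqrt (\<sigma> j)" for h
    have "bounded_linear F"
    proof (rule bounded_linear_intro[where K="\<kappa> * (\<integral>z. \<bar>e j z\<bar> \<partial>M) / sqrt (\<sigma> j)"])
      fix a b :: 'h
      have "(\<lambda>z. e j z * ((a + b) \<bullet> Phi z)) = (\<lambda>z. e j z * (a \<bullet> Phi z) + e j z * (b \<bullet> Phi z))"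
        by (simp add: inner_add_left distrib_left)
      then show "F (a + b) = F a + F b"
        unfolding F_def by (simp add: heP_int add_divide_distrib)
    next
      fix r :: real and a :: 'h
      have "(\<lambda>z. e j z * ((r *\<^sub>R a) \<bullet> Phi z)) = (\<lambda>z. r * (e j z * (a \<bullet> Phi z)))"
        by (simp add: mult_ac)
      then show "F (r *\<^sub>R a) = r *\<^sub>R F a"
        unfolding F_def by simp
    next
      fix a :: 'h
      have "\<bar>\<integral>z. e j z * (a \<bullet> Phi z) \<partial>M\<bar> \<le> (\<integral>z. \<bar>e j z * (a \<bullet> Phi z)\<bar> \<partial>M)"
        by (rule integral_abs_bound)
      also have "\<dots> \<le> (\<integral>z. (\<kappa> * norm a) * \<bar>e j z\<bar> \<partial>M)"
      proof (rule integral_mono)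
        show "integrable M (\<lambda>z. \<bar>e j z * (a \<bullet> Phi z)\<bar>)" using heP_int by simp
        show "integrable M (\<lambda>z. (\<kappa> * norm a) * \<bar>e j z\<bar>)" using e_int by simp
        fix z assume z: "z \<in> space M"
        show "\<bar>e j z * (a \<bullet> Phi z)\<bar> \<le> (\<kappa> * norm a) * \<bar>e j z\<bar>"
          using mult_left_mono[OF hP_bound[OF z, of a] abs_ge_zero[of "e j z"]]
          by (simp add: abs_mult mult.commute)
      qed
      also have "\<dots> = norm a * (\<kappa> * (\<integral>z. \<bar>e j z\<bar> \<partial>M))" by simp
      finally have "\<bar>\<integral>z. e j z * (a \<bullet> Phi z) \<partial>M\<bar> \<le> norm a * (\<kappa> * (\<integral>z. \<bar>e j z\<bar> \<partial>M))" .
      then show "norm (F a) \<le> norm a * (\<kappa> * (\<integral>z. \<bar>e j z\<bar> \<partial>M) / sqrt (\<sigma> j))"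
        unfolding F_def using sp by (simp add: divide_right_mono)
    qed
    then obtain u where "\<forall>h. F h = u \<bullet> h" using riesz_rep by blast
    then show ?thesis using sp unfolding F_def by (intro exI[of _ u]) auto
  qed
  then obtain u where u: "\<And>j. \<sigma> j = 0 \<Longrightarrow> u j = 0"
    "\<And>j h. \<sigma> j > 0 \<Longrightarrow> u j \<bullet> h = (\<integral>z. e j z * (h \<bullet> Phi z) \<partial>M) / sqrt (\<sigma> j)"
    by metis
  have uPhi: "u j \<bullet> Phi y = sqrt (\<sigma> j) * e j y" if y: "y \<in> space M" for j y
  proof (cases "\<sigma> j = 0")
    case True then show ?thesis using u(1) by simp
  next
    case False
    then have sp: "\<sigma> j > 0" using \<sigma>_nonneg[of j] by simp
    have "u j \<bullet> Phi y = (\<integral>z. e j z * k z y \<partial>M) / sqrt (\<sigma> j)"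
      using u(2)[OF sp, of "Phi y"] by (simp add: feature inner_commute)
    also have "\<dots> = \<sigma> j * e j y / sqrt (\<sigma> j)" using mercer_int[OF y] by simp
    also have "\<dots> = (\<sigma> j / sqrt (\<sigma> j)) * e j y" by simp
    also have "\<dots> = sqrt (\<sigma> j) * e j y" using sp by (simp add: real_div_sqrt)
    finally show ?thesis .
  qed
  have uorth: "u i \<bullet> u j = (if i = j \<and> \<sigma> j > 0 then 1 else 0)" for i j
  proof (cases "\<sigma> i = 0")
    case True then show ?thesis using u(1) by auto
  next
    case False
    then have sp: "\<sigma> i > 0" using \<sigma>_nonneg[of i] by simp
    have "u i \<bullet> u j = (\<integral>z. e i z * (u j \<bullet> Phi z) \<partial>M) / sqrt (\<sigma> i)"
      by (rule u(2)[OF sp])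
    also have "(\<integral>z. e i z * (u j \<bullet> Phi z) \<partial>M) = (\<integral>z. sqrt (\<sigma> j) * (e i z * e j z) \<partial>M)"
      by (rule Bochner_Integration.integral_cong[OF refl]) (simp add: uPhi mult_ac)
    also have "\<dots> = sqrt (\<sigma> j) * (if i = j then 1 else 0)" by (simp add: e_orthonormal)
    finally show ?thesis using sp by auto
  qed
  define T where "T y = (\<Sum>j. \<sigma> (j + d) * (e (j + d) y)\<^sup>2)" for y
  have tail_T: "tail_fun \<sigma> e d y = sqrt (T y)" for y unfolding tail_fun_def T_def by simp
  have T_sums: "(\<lambda>j. \<sigma> (j + d) * (e (j + d) y)\<^sup>2) sums T y" if y: "y \<in> space M" for y
  proof -
    have "summable (\<lambda>j. \<sigma> (j + d) * (e (j + d) y)\<^sup>2)"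
      using summable_iff_shift[where f="\<lambda>j. \<sigma> j * (e j y)\<^sup>2" and k=d] ser[OF y] by (simp add: sums_iff)
    then show ?thesis unfolding T_def by (rule summable_sums)
  qed
  have T_nonneg: "T y \<ge> 0" if y: "y \<in> space M" for y
  proof -
    have sm: "summable (\<lambda>j. \<sigma> (j + d) * (e (j + d) y)\<^sup>2)" using T_sums[OF y] by (simp add: sums_iff)
    show ?thesis unfolding T_def by (rule suminf_nonneg[OF sm]) (simp add: \<sigma>_nonneg)
  qed
  have k_split: "k y y = T y + (\<Sum>j<d. \<sigma> j * (e j y)\<^sup>2)" if y: "y \<in> space M" for y
    using suminf_split_initial_segment[of "\<lambda>j. \<sigma> j * (e j y)\<^sup>2" d] ser[OF y]
    unfolding T_def by (simp add: sums_iff)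
  have tail_sq: "(tail_fun \<sigma> e d y)\<^sup>2 = T y" if y: "y \<in> space M" for y
    using T_nonneg[OF y] by (simp add: tail_T)
  have tail_nonneg: "tail_fun \<sigma> e d y \<ge> 0" if y: "y \<in> space M" for y
    using T_nonneg[OF y] by (simp add: tail_T)
  have T_le: "T y \<le> k y y" if y: "y \<in> space M" for y
    using k_split[OF y] \<sigma>_nonneg by (simp add: sum_nonneg)
  have tail_le: "tail_fun \<sigma> e d y \<le> \<kappa>" if y: "y \<in> space M" for y
    unfolding tail_T by (rule order_trans[OF real_sqrt_le_mono[OF T_le[OF y]] kappa_bound[OF y]])
  have tail_meas: "tail_fun \<sigma> e d \<in> borel_measurable M"
    unfolding tail_fun_def by measurable
  have tail_int: "integrable M (tail_fun \<sigma> e d)"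
  proof (rule Bochner_Integration.integrable_bound[of _ "\<lambda>_. \<kappa>"])
    show "integrable M (\<lambda>_. \<kappa>)" by simp
    show "AE y in M. norm (tail_fun \<sigma> e d y) \<le> norm \<kappa>"
      using tail_le tail_nonneg kappa_pos by (intro AE_I2) auto
  qed (rule tail_meas)
  define G where "G = (\<integral>y. tail_fun \<sigma> e d y \<partial>M)"
  have G_nonneg: "G \<ge> 0" unfolding G_def using tail_nonneg by simp
  have sig_summable: "summable \<sigma>"
  proof (rule summableI_nonneg_bounded[where x="\<kappa>\<^sup>2"])
    show "0 \<le> \<sigma> n" for n by (rule \<sigma>_nonneg)
    fix n
    have "(\<Sum>i<n. \<sigma> i) = (\<Sum>i<n. \<sigma> i * (\<integral>y. e i y * e i y \<partial>M))"
      by (simp add: e_orthonormal)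
    also have "\<dots> = (\<integral>y. (\<Sum>i<n. \<sigma> i * (e i y)\<^sup>2) \<partial>M)"
      by (simp add: ee_int power2_eq_square)
    also have "\<dots> \<le> (\<integral>y. \<kappa>\<^sup>2 \<partial>M)"
    proof (rule integral_mono)
      show "integrable M (\<lambda>y. \<Sum>i<n. \<sigma> i * (e i y)\<^sup>2)" using e_L2 by simp
      show "integrable M (\<lambda>y. \<kappa>\<^sup>2)" by simp
      fix y assume y: "y \<in> space M"
      have "(\<Sum>i<n. \<sigma> i * (e i y)\<^sup>2) \<le> k y y"
        using ser[OF y] \<sigma>_nonneg by (intro sum_le_suminf[of _ "{..<n}", THEN order_trans]) (auto simp: sums_iff)
      then show "(\<Sum>i<n. \<sigma> i * (e i y)\<^sup>2) \<le> \<kappa>\<^sup>2" using kyy[OF y] by linarith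
    qed
    also have "\<dots> = \<kappa>\<^sup>2" by (simp add: P.prob_space)
    finally show "(\<Sum>i<n. \<sigma> i) \<le> \<kappa>\<^sup>2" .
  qed
  have intT: "(\<integral>y. T y \<partial>M) = (\<Sum>j. \<sigma> (j + d))"
  proof -
    have "(\<integral>y. T y \<partial>M) = (\<integral>y. (\<Sum>j. \<sigma> (j + d) * (e (j + d) y)\<^sup>2) \<partial>M)"
      unfolding T_def ..
    also have "\<dots> = (\<Sum>j. (\<integral>y. \<sigma> (j + d) * (e (j + d) y)\<^sup>2 \<partial>M))"
    proof (rule integral_suminf)
      show "integrable M (\<lambda>y. \<sigma> (j + d) * (e (j + d) y)\<^sup>2)" for j using e_L2 by simp
      show "AE y in M. summable (\<lambda>j. norm (\<sigma> (j + d) * (e (j + d) y)\<^sup>2))"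
        using T_sums \<sigma>_nonneg by (intro AE_I2) (auto simp: sums_iff abs_mult)
      have "(\<integral>y. norm (\<sigma> (j + d) * (e (j + d) y)\<^sup>2) \<partial>M) = \<sigma> (j + d)" for j
        using e_orthonormal[of "j + d" "j + d"] \<sigma>_nonneg[of "j + d"] by (simp add: abs_mult power2_eq_square)
      then show "summable (\<lambda>j. \<integral>y. norm (\<sigma> (j + d) * (e (j + d) y)\<^sup>2) \<partial>M)"
        using sig_summable summable_iff_shift[where f=\<sigma> and k=d] by simp
    qed
    also have "\<dots> = (\<Sum>j. \<sigma> (j + d))"
      using e_orthonormal by (simp add: power2_eq_square)
    finally show ?thesis .
  qed
  have G_le: "G \<le> sqrt (\<Sum>j. \<sigma> (j + d))"
  proof -
    have int2: "integrable M (\<lambda>y. (tail_fun \<sigma> e d y)\<^sup>2)"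
    proof (rule Bochner_Integration.integrable_bound[of _ "\<lambda>_. \<kappa>\<^sup>2"])
      show "integrable M (\<lambda>_. \<kappa>\<^sup>2)" by simp
      show "(\<lambda>y. (tail_fun \<sigma> e d y)\<^sup>2) \<in> borel_measurable M" using tail_meas by measurable
      show "AE y in M. norm ((tail_fun \<sigma> e d y)\<^sup>2) \<le> norm (\<kappa>\<^sup>2)"
        using tail_le tail_nonneg kappa_pos by (intro AE_I2) (auto intro!: power_mono)
    qed
    have "0 \<le> P.variance (tail_fun \<sigma> e d)" by (rule P.variance_positive)
    then have "G\<^sup>2 \<le> (\<integral>y. (tail_fun \<sigma> e d y)\<^sup>2 \<partial>M)"
      using P.variance_eq[OF tail_int int2] unfolding G_def by simp
    also have "\<dots> = (\<integral>y. T y \<partial>M)"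
      by (rule Bochner_Integration.integral_cong[OF refl]) (simp add: tail_sq)
    finally have "G\<^sup>2 \<le> (\<Sum>j. \<sigma> (j + d))" using intT by simp
    then show ?thesis using G_nonneg real_le_rsqrt by blast
  qed
  define \<Delta> where "\<Delta> j = (\<integral>y. Psi_coord \<sigma> e d j y \<partial>M) - (\<Sum>i<N. w i * Psi_coord \<sigma> e d j (x i))" for j
  have L2D: "L2_set \<Delta> {..d} \<le> \<epsilon>" using approx unfolding \<Delta>_def .
  have w_nonneg: "\<And>i. i < N \<Longrightarrow> w i \<ge> 0" and w_sum: "(\<Sum>i<N. w i) = 1"
    using w_simplex unfolding prob_simplex_def by auto
  have Psi_lt: "Psi_coord \<sigma> e d j = (\<lambda>y. sqrt (\<sigma> j) * e j y)" if "j < d" for j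
    using that unfolding Psi_coord_def by auto
  have Psi_d: "Psi_coord \<sigma> e d d = tail_fun \<sigma> e d"
    unfolding Psi_coord_def by auto
  have Psi_int: "integrable M (Psi_coord \<sigma> e d j)" if "j < d" for j
    using e_int[of j] unfolding Psi_lt[OF that] by simp
  have Delta_d: "\<Delta> d = G - (\<Sum>i<N. w i * tail_fun \<sigma> e d (x i))"
    unfolding \<Delta>_def G_def Psi_d ..
  have main: "\<bar>(\<integral>y. rkhs_fun Phi h y \<partial>M) - quad N w x (rkhs_fun Phi h)\<bar> \<le> 2 * G + \<epsilon>"
    if nh: "norm h \<le> 1" for h
  proof -
    define a where "a j = h \<bullet> u j" for j
    define hp where "hp = h - (\<Sum>j<d. (h \<bullet> u j) *\<^sub>R u j)"
    define \<beta> where "\<beta> = norm hp"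
    have hp_orth: "hp \<bullet> u i = 0" if "i < d" for i
      unfolding hp_def by (rule bessel_decomp(1)[OF uorth that])
    have normh: "(norm h)\<^sup>2 = \<beta>\<^sup>2 + (\<Sum>j<d. (a j)\<^sup>2)"
      unfolding \<beta>_def hp_def a_def by (rule bessel_decomp(2)[OF uorth])
    define R where "R y = hp \<bullet> Phi y" for y
    have R_meas: "R \<in> borel_measurable M" unfolding R_def by (rule meas_h)
    have R_bound: "\<bar>R y\<bar> \<le> \<beta> * tail_fun \<sigma> e d y" if y: "y \<in> space M" for y
    proof -
      define v where "v = Phi y - (\<Sum>j<d. (Phi y \<bullet> u j) *\<^sub>R u j)"
      have nv: "(norm (Phi y))\<^sup>2 = (norm v)\<^sup>2 + (\<Sum>j<d. (Phi y \<bullet> u j)\<^sup>2)"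
        unfolding v_def by (rule bessel_decomp(2)[OF uorth])
      have "(\<Sum>j<d. (Phi y \<bullet> u j)\<^sup>2) = (\<Sum>j<d. \<sigma> j * (e j y)\<^sup>2)"
        using uPhi[OF y] \<sigma>_nonneg by (intro sum.cong refl) (simp add: inner_commute power_mult_distrib)
      moreover have "(norm (Phi y))\<^sup>2 = k y y" by (simp add: feature power2_norm_eq_inner)
      ultimately have "(norm v)\<^sup>2 = (tail_fun \<sigma> e d y)\<^sup>2"
        using nv k_split[OF y] tail_sq[OF y] by linarith
      then have nv2: "norm v = tail_fun \<sigma> e d y"
        using tail_nonneg[OF y] by (metis norm_ge_zero power2_eq_iff_nonneg)
      have "hp \<bullet> v = hp \<bullet> Phi y"
        unfolding v_def using hp_orth by (simp add: inner_diff_right inner_sum_right)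
      then have "\<bar>R y\<bar> = \<bar>hp \<bullet> v\<bar>" unfolding R_def by simp
      also have "\<dots> \<le> \<beta> * norm v" unfolding \<beta>_def by (rule Cauchy_Schwarz_ineq2)
      finally show ?thesis using nv2 by simp
    qed
    have beta_nonneg: "\<beta> \<ge> 0" unfolding \<beta>_def by simp
    have R_int: "integrable M R"
    proof (rule Bochner_Integration.integrable_bound[of _ "\<lambda>y. \<beta> * tail_fun \<sigma> e d y"])
      show "integrable M (\<lambda>y. \<beta> * tail_fun \<sigma> e d y)" using tail_int by simp
      show "AE y in M. norm (R y) \<le> norm (\<beta> * tail_fun \<sigma> e d y)"
        using R_bound tail_nonneg beta_nonneg by (intro AE_I2) (auto simp: abs_mult)
    qed (rule R_meas)
    have decomp: "h \<bullet> Phi y = (\<Sum>j<d. a j * Psi_coord \<sigma> e d j y) + R y" if y: "y \<in> space M" for y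
    proof -
      have "R y = h \<bullet> Phi y - (\<Sum>j<d. a j * (u j \<bullet> Phi y))"
        unfolding R_def hp_def a_def by (simp add: inner_diff_left inner_sum_left)
      also have "(\<Sum>j<d. a j * (u j \<bullet> Phi y)) = (\<Sum>j<d. a j * Psi_coord \<sigma> e d j y)"
        by (intro sum.cong refl) (simp add: uPhi[OF y] Psi_lt)
      finally show ?thesis by simp
    qed
    have int_eq: "(\<integral>y. rkhs_fun Phi h y \<partial>M) = (\<Sum>j<d. a j * (\<integral>y. Psi_coord \<sigma> e d j y \<partial>M)) + (\<integral>y. R y \<partial>M)"
    proof -
      have "(\<integral>y. rkhs_fun Phi h y \<partial>M) = (\<integral>y. (\<Sum>j<d. a j * Psi_coord \<sigma> e d j y) + R y \<partial>M)"
        unfolding rkhs_fun_def by (rule Bochner_Integration.integral_cong[OF refl]) (simp add: decomp)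
      also have "\<dots> = (\<integral>y. (\<Sum>j<d. a j * Psi_coord \<sigma> e d j y) \<partial>M) + (\<integral>y. R y \<partial>M)"
        using Psi_int R_int by (intro Bochner_Integration.integral_add) auto
      also have "(\<integral>y. (\<Sum>j<d. a j * Psi_coord \<sigma> e d j y) \<partial>M) = (\<Sum>j<d. a j * (\<integral>y. Psi_coord \<sigma> e d j y \<partial>M))"
      proof -
        have "(\<integral>y. (\<Sum>j<d. a j * Psi_coord \<sigma> e d j y) \<partial>M) = (\<Sum>j<d. (\<integral>y. a j * Psi_coord \<sigma> e d j y \<partial>M))"
          by (rule Bochner_Integration.integral_sum) (use Psi_int in auto)
        then show ?thesis by simp
      qed
      finally show ?thesis .
    qed
    have quad_eq: "quad N w x (rkhs_fun Phi h) = (\<Sum>j<d. a j * (\<Sum>i<N. w i * Psi_coord \<sigma> e d j (x i))) + (\<Sum>i<N. w i * R (x i))"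
    proof -
      have "quad N w x (rkhs_fun Phi h) = (\<Sum>i<N. w i * ((\<Sum>j<d. a j * Psi_coord \<sigma> e d j (x i)) + R (x i)))"
        unfolding quad_def rkhs_fun_def by (intro sum.cong refl) (simp add: decomp x_in)
      also have "\<dots> = (\<Sum>i<N. \<Sum>j<d. a j * (w i * Psi_coord \<sigma> e d j (x i))) + (\<Sum>i<N. w i * R (x i))"
        by (simp add: distrib_left sum.distrib sum_distrib_left mult_ac)
      also have "(\<Sum>i<N. \<Sum>j<d. a j * (w i * Psi_coord \<sigma> e d j (x i))) = (\<Sum>j<d. a j * (\<Sum>i<N. w i * Psi_coord \<sigma> e d j (x i)))"
        by (subst sum.swap) (simp add: sum_distrib_left)
      finally show ?thesis .
    qed
    have E_eq: "(\<integral>y. rkhs_fun Phi h y \<partial>M) - quad N w x (rkhs_fun Phi h)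
        = (\<Sum>j<d. a j * \<Delta> j) + ((\<integral>y. R y \<partial>M) - (\<Sum>i<N. w i * R (x i)))"
      unfolding int_eq quad_eq \<Delta>_def by (simp add: right_diff_distrib sum_subtractf)
    have b1: "\<bar>\<integral>y. R y \<partial>M\<bar> \<le> \<beta> * G"
    proof -
      have "\<bar>\<integral>y. R y \<partial>M\<bar> \<le> (\<integral>y. \<bar>R y\<bar> \<partial>M)" by (rule integral_abs_bound)
      also have "\<dots> \<le> (\<integral>y. \<beta> * tail_fun \<sigma> e d y \<partial>M)"
        using R_int tail_int R_bound by (intro integral_mono) auto
      finally show ?thesis unfolding G_def by simp
    qed
    have b2: "\<bar>\<Sum>i<N. w i * R (x i)\<bar> \<le> \<beta> * (G - \<Delta> d)"
    proof -
      have "\<bar>\<Sum>i<N. w i * R (x i)\<bar> \<le> (\<Sum>i<N. \<bar>w i * R (x i)\<bar>)" by (rule sum_abs)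
      also have "\<dots> \<le> (\<Sum>i<N. \<beta> * (w i * tail_fun \<sigma> e d (x i)))"
      proof (intro sum_mono)
        fix i assume "i \<in> {..<N}"
        then have i: "i < N" by simp
        have "\<bar>w i * R (x i)\<bar> = w i * \<bar>R (x i)\<bar>" using w_nonneg[OF i] by (simp add: abs_mult)
        also have "\<dots> \<le> w i * (\<beta> * tail_fun \<sigma> e d (x i))"
          using R_bound[OF x_in[OF i]] w_nonneg[OF i] by (rule mult_left_mono)
        finally show "\<bar>w i * R (x i)\<bar> \<le> \<beta> * (w i * tail_fun \<sigma> e d (x i))" by (simp add: mult_ac)
      qed
      also have "\<dots> = \<beta> * (G - \<Delta> d)" unfolding Delta_d by (simp add: sum_distrib_left)
      finally show ?thesis .
    qed
    define a' where "a' j = (if j < d then a j else \<beta>)" for j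
    have cs: "(\<Sum>j\<in>{..d}. \<bar>a' j\<bar> * \<bar>\<Delta> j\<bar>) \<le> L2_set a' {..d} * L2_set \<Delta> {..d}"
      by (rule L2_set_mult_ineq)
    have split1: "(\<Sum>j\<in>{..d}. \<bar>a' j\<bar> * \<bar>\<Delta> j\<bar>) = (\<Sum>j<d. \<bar>a j\<bar> * \<bar>\<Delta> j\<bar>) + \<beta> * \<bar>\<Delta> d\<bar>"
      unfolding lessThan_Suc_atMost[symmetric] using beta_nonneg by (simp add: a'_def)
    have split2: "L2_set a' {..d} = norm h"
    proof -
      have "(\<Sum>j\<in>{..d}. (a' j)\<^sup>2) = (\<Sum>j<d. (a j)\<^sup>2) + \<beta>\<^sup>2"
        unfolding lessThan_Suc_atMost[symmetric] by (simp add: a'_def)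
      then have "(\<Sum>j\<in>{..d}. (a' j)\<^sup>2) = (norm h)\<^sup>2" using normh by linarith
      then show ?thesis unfolding L2_set_def by simp
    qed
    have "\<bar>\<Sum>j<d. a j * \<Delta> j\<bar> \<le> (\<Sum>j<d. \<bar>a j\<bar> * \<bar>\<Delta> j\<bar>)"
      by (rule order_trans[OF sum_abs]) (simp add: abs_mult)
    then have t1: "\<bar>\<Sum>j<d. a j * \<Delta> j\<bar> + \<beta> * \<bar>\<Delta> d\<bar> \<le> norm h * L2_set \<Delta> {..d}"
      using cs[unfolded split2] split1 by linarith
    have t2: "norm h * L2_set \<Delta> {..d} \<le> \<epsilon>"
      using mult_right_mono[OF nh L2_set_nonneg[of \<Delta> "{..d}"]] L2D by linarith
    have beta_le: "\<beta> \<le> 1"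
    proof -
      have "\<beta>\<^sup>2 \<le> (norm h)\<^sup>2" using normh by (simp add: sum_nonneg)
      also have "\<dots> \<le> 1" using nh by (simp add: power_le_one)
      finally show ?thesis using beta_nonneg by (simp add: power_le_one_iff)
    qed
    have t3: "\<beta> * G \<le> G" using mult_right_mono[OF beta_le G_nonneg] by simp
    have t4: "- (\<beta> * \<Delta> d) \<le> \<beta> * \<bar>\<Delta> d\<bar>"
      using mult_left_mono[OF _ beta_nonneg, of "- \<Delta> d" "\<bar>\<Delta> d\<bar>"] by simp
    show ?thesis
      unfolding E_eq using b1 b2 t1 t2 t3 t4
      by (smt (verit) right_diff_distrib)
  qed
  have wce_le: "wce N w x Phi M \<le> 2 * G + \<epsilon>"
    unfolding wce_def
  proof (rule cSUP_least)
    show "{h::'h. norm h \<le> 1} \<noteq> {}" by (auto intro!: exI[of _ 0])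
    fix h :: 'h assume "h \<in> {h. norm h \<le> 1}"
    then show "\<bar>(\<integral>y. rkhs_fun Phi h y \<partial>M) - quad N w x (rkhs_fun Phi h)\<bar> \<le> 2 * G + \<epsilon>"
      using main by simp
  qed
  show ?thesis using wce_le G_le unfolding G_def by simp
qed

end
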